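(* Let $V$ and $W$ be two-dimensional inner-product spaces, and let $x,y\in V$ be linearly independent vectors of equal length, with $\theta$ the angle between them. Then for every linear map $A\in\mathrm{Hom}(V,W)$, \[ |A|^2\le\frac{2}{1-\cos\theta}\left(\frac{|Ax|^2}{|x|^2}+\frac{|Ay|^2}{|y|^2}+\frac{|A(x+y)|^2}{|x+y|^2}\right). \]
   Context: $|A|$ denotes the Frobenius (Hilbert–Schmidt) norm of $A$ with respect to the inner products on $V$ and $W$. *)

theory Defs
  imports "HOL-Analysis.Analysis"
begin

definition frob_norm :: "('a::euclidean_space \<Rightarrow> 'b::real_inner) \<Rightarrow> real" where
  "frob_norm A = sqrt (\<Sum>b\<in>Basis. (norm (A b))\<^sup>2)"

definition vec_angle :: "'a::real_inner \<Rightarrow> 'a \<Rightarrow> real" where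
  "vec_angle x y = arccos ((x \<bullet> y) / (norm x * norm y))"

end

theory Submission
  imports Defs
begin

theorem lemmaA2:
  fixes x y :: "'v::euclidean_space" and A :: "'v \<Rightarrow> 'w::euclidean_space"
  assumes "DIM('v) = 2" and "DIM('w) = 2"
    and "independent {x, y}" and "x \<noteq> y"
    and "norm x = norm y"
    and "linear A"
  shows "(frob_norm A)\<^sup>2 \<le> 2 / (1 - cos (vec_angle x y)) *
           ((norm (A x))\<^sup>2 / (norm x)\<^sup>2 + (norm (A y))\<^sup>2 / (norm y)\<^sup>2
            + (norm (A (x + y)))\<^sup>2 / (norm (x + y))\<^sup>2)"
proof -
  note lin = assms(6)
  define n where "n = x \<bullet> x"
  define d where "d = x \<bullet> y"
  have yy: "y \<bullet> y = n" using assms(5) by (simp add: n_def dot_square_norm)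
  have x0: "x \<noteq> 0" using assms(3) by (metis dependent_zero insertI1)
  have xmy: "x \<noteq> - y"
  proof
    assume "x = - y"
    then have "x = (-1) *\<^sub>R y" by simp
    then show False using assms(3,4) x0
      by (metis dependent_def insertI1 insertI2 insert_Diff_if singletonD span_base span_scale)
  qed
  have npos: "n > 0" using x0 by (simp add: n_def)
  have "0 < (x - y) \<bullet> (x - y)" using assms(4) by simp
  then have nd1: "n - d > 0" unfolding n_def d_def using yy
    by (simp add: inner_diff_left inner_diff_right inner_commute n_def)
  have "0 < (x + y) \<bullet> (x + y)" using xmy by (simp add: add_eq_0_iff, metis minus_minus)
  then have nd2: "n + d > 0" unfolding n_def d_def using yy
    by (simp add: inner_add_left inner_add_right inner_commute n_def)
  define D where "D = n*n - d*d"
  have Dpos: "D > 0" using nd1 nd2 unfolding D_def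
    by (metis mult_pos_pos square_diff_square_factored mult.commute)
  have sp: "UNIV \<subseteq> span {x, y}"
  proof -
    have "card {x,y} = dim (UNIV::'v set)" using assms(1,4) by (simp add: dim_UNIV)
    then show ?thesis using card_eq_dim[of "{x,y}" UNIV] assms(3) by auto
  qed
  have rep: "D *\<^sub>R z = (n * (z \<bullet> x) - d * (z \<bullet> y)) *\<^sub>R x + (n * (z \<bullet> y) - d * (z \<bullet> x)) *\<^sub>R y"
    for z
  proof -
    have "z \<in> span {x, y}" using sp by auto
    then obtain a where "z - a *\<^sub>R x \<in> span {y}" by (auto simp: span_insert)
    then obtain c where "z - a *\<^sub>R x = c *\<^sub>R y" by (auto simp: span_singleton)
    then have z: "z = a *\<^sub>R x + c *\<^sub>R y" by (simp add: algebra_simps)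
    have zx: "z \<bullet> x = a * n + c * d" using yy
      by (simp add: z inner_add_left n_def d_def inner_commute[of y x])
    have zy: "z \<bullet> y = a * d + c * n" using yy
      by (simp add: z inner_add_left n_def d_def inner_commute[of y x])
    have c1: "n * (z \<bullet> x) - d * (z \<bullet> y) = a * D" unfolding zx zy D_def by (simp add: algebra_simps)
    have c2: "n * (z \<bullet> y) - d * (z \<bullet> x) = c * D" unfolding zx zy D_def by (simp add: algebra_simps)
    show ?thesis unfolding c1 c2 by (simp add: z scaleR_add_right mult.commute)
  qed
  define P where "P = A x \<bullet> A x"
  define Q where "Q = A y \<bullet> A y"
  define R where "R = A x \<bullet> A y"
  define u where "u z = n * (z \<bullet> x) - d * (z \<bullet> y)" for z
  define v where "v z = n * (z \<bullet> y) - d * (z \<bullet> x)" for z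
  have Az: "D*D * (norm (A z))\<^sup>2 = (u z)^2 * P + 2 * u z * v z * R + (v z)^2 * Q" for z
  proof -
    have "A (D *\<^sub>R z) = u z *\<^sub>R A x + v z *\<^sub>R A y"
      using rep[of z] lin by (simp add: u_def v_def linear_add linear_scale)
    then have "D *\<^sub>R A z = u z *\<^sub>R A x + v z *\<^sub>R A y" using lin by (simp add: linear_scale)
    then have "(D *\<^sub>R A z) \<bullet> (D *\<^sub>R A z) = (u z *\<^sub>R A x + v z *\<^sub>R A y) \<bullet> (u z *\<^sub>R A x + v z *\<^sub>R A y)"
      by simp
    moreover have "(norm (A z))\<^sup>2 = A z \<bullet> A z" by (simp add: power2_norm_eq_inner)
    ultimately show ?thesis
      by (simp add: inner_add_left inner_add_right P_def Q_def R_def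
          inner_commute algebra_simps power2_eq_square)
  qed
  have sxx: "(\<Sum>b\<in>Basis. (b \<bullet> x) * (b \<bullet> x)) = n"
    unfolding n_def by (subst euclidean_inner) (simp add: inner_commute)
  have syy: "(\<Sum>b\<in>Basis. (b \<bullet> y) * (b \<bullet> y)) = n"
    unfolding yy[symmetric] by (subst euclidean_inner) (simp add: inner_commute)
  have sxy: "(\<Sum>b\<in>Basis. (b \<bullet> x) * (b \<bullet> y)) = d"
    unfolding d_def by (subst euclidean_inner) (simp add: inner_commute)
  have su: "(\<Sum>b\<in>Basis. (u b)^2) = n * D"
  proof -
    have "(\<Sum>b\<in>Basis. (u b)^2) = (\<Sum>b\<in>Basis. n*n*((b \<bullet> x) * (b \<bullet> x)) - 2*n*d*((b \<bullet> x) * (b \<bullet> y)) + d*d*((b \<bullet> y) * (b \<bullet> y)))"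
      by (rule sum.cong) (auto simp: u_def power2_eq_square algebra_simps)
    also have "\<dots> = n*n*n - 2*n*d*d + d*d*n"
      by (simp add: sum.distrib sum_subtractf sum_distrib_left[symmetric] sxx syy sxy)
    finally show ?thesis by (simp add: D_def algebra_simps)
  qed
  have sv: "(\<Sum>b\<in>Basis. (v b)^2) = n * D"
  proof -
    have "(\<Sum>b\<in>Basis. (v b)^2) = (\<Sum>b\<in>Basis. n*n*((b \<bullet> y) * (b \<bullet> y)) - 2*n*d*((b \<bullet> x) * (b \<bullet> y)) + d*d*((b \<bullet> x) * (b \<bullet> x)))"
      by (rule sum.cong) (auto simp: v_def power2_eq_square algebra_simps)
    also have "\<dots> = n*n*n - 2*n*d*d + d*d*n"
      by (simp add: sum.distrib sum_subtractf sum_distrib_left[symmetric] sxx syy sxy)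
    finally show ?thesis by (simp add: D_def algebra_simps)
  qed
  have suv: "(\<Sum>b\<in>Basis. u b * v b) = - d * D"
  proof -
    have "(\<Sum>b\<in>Basis. u b * v b) = (\<Sum>b\<in>Basis. (n*n + d*d)*((b \<bullet> x) * (b \<bullet> y)) - n*d*((b \<bullet> x) * (b \<bullet> x)) - n*d*((b \<bullet> y) * (b \<bullet> y)))"
      by (rule sum.cong) (auto simp: u_def v_def algebra_simps)
    also have "\<dots> = (n*n + d*d)*d - n*d*n - n*d*n"
      by (simp add: sum.distrib sum_subtractf sum_distrib_left[symmetric] sxx syy sxy)
    finally show ?thesis by (simp add: D_def algebra_simps)
  qed
  have "D*D * (frob_norm A)\<^sup>2 = (\<Sum>b\<in>Basis. D*D*(norm (A b))\<^sup>2)"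
    unfolding frob_norm_def by (simp add: sum_nonneg sum_distrib_left)
  also have "\<dots> = (\<Sum>b\<in>Basis. (u b)^2 * P + 2 * u b * v b * R + (v b)^2 * Q)"
    using Az by simp
  also have "\<dots> = P * (\<Sum>b\<in>Basis. (u b)^2) + 2 * R * (\<Sum>b\<in>Basis. u b * v b) + Q * (\<Sum>b\<in>Basis. (v b)^2)"
    by (simp add: sum.distrib sum_distrib_left algebra_simps)
  also have "\<dots> = D * (n * (P + Q) - 2 * d * R)"
    unfolding su sv suv by (simp add: algebra_simps)
  finally have "D * (D * (frob_norm A)\<^sup>2) = D * (n * (P + Q) - 2 * d * R)"
    by (simp add: mult.assoc)
  then have "D * (frob_norm A)\<^sup>2 = n * (P + Q) - 2 * d * R" using Dpos by simp
  then have F: "(frob_norm A)\<^sup>2 = (n * (P + Q) - 2 * d * R) / D"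
    using Dpos by (simp add: field_simps)
  have cs: "\<bar>d / n\<bar> \<le> 1"
  proof -
    have "\<bar>d\<bar> \<le> norm x * norm y" unfolding d_def by (rule Cauchy_Schwarz_ineq2)
    also have "\<dots> = n" using assms(5) by (simp add: n_def dot_square_norm power2_eq_square)
    finally show ?thesis using npos by (simp add: abs_div)
  qed
  have cosv: "cos (vec_angle x y) = d / n"
  proof -
    have "(x \<bullet> y) / (norm x * norm y) = d / n" using assms(5)
      by (simp add: d_def n_def dot_square_norm power2_eq_square)
    then show ?thesis unfolding vec_angle_def using cs by (simp add: cos_arccos_abs)
  qed
  have nx: "(norm x)\<^sup>2 = n" "(norm y)\<^sup>2 = n" using yy by (simp_all add: n_def dot_square_norm)
  have nxy: "(norm (x + y))\<^sup>2 = 2*n + 2*d"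
    using yy by (simp add: dot_square_norm[symmetric] inner_add_left inner_add_right n_def d_def inner_commute)
  have Axy: "(norm (A (x + y)))\<^sup>2 = P + Q + 2 * R"
    using lin by (simp add: linear_add dot_square_norm[symmetric] inner_add_left inner_add_right P_def Q_def R_def inner_commute)
  have nAx: "(norm (A x))\<^sup>2 = P" "(norm (A y))\<^sup>2 = Q" by (simp_all add: P_def Q_def dot_square_norm)
  have PQR: "P + Q + R \<ge> 0"
  proof -
    have "0 \<le> (A x + A y) \<bullet> (A x + A y)" by simp
    moreover have "0 \<le> P" "0 \<le> Q" by (simp_all add: P_def Q_def)
    moreover have "(A x + A y) \<bullet> (A x + A y) = P + Q + 2 * R"
      by (simp add: inner_add_left inner_add_right P_def Q_def R_def inner_commute)
    ultimately show ?thesis by linarith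
  qed
  have key: "(n * (P + Q) - 2 * d * R) / D \<le> 2 / (1 - d / n) * (P / n + Q / n + (P + Q + 2 * R) / (2*n + 2*d))"
  proof -
    have e1: "1 - d / n = (n - d) / n" using npos by (simp add: field_simps)
    have e2: "P / n + Q / n + (P + Q + 2 * R) / (2*n + 2*d) = (2*(n+d)*(P+Q) + n*(P+Q+2*R)) / (2*n*(n+d))"
      using npos nd2 by (simp add: field_simps)
    have rhs: "2 / (1 - d / n) * (P / n + Q / n + (P + Q + 2 * R) / (2*n + 2*d))
        = (2*(n+d)*(P+Q) + n*(P+Q+2*R)) / ((n-d)*(n+d))"
    proof -
      define X where "X = 2*(n+d)*(P+Q) + n*(P+Q+2*R)"
      have "2 / ((n - d) / n) * (X / (2*n*(n+d))) = (2*n*X) / ((n-d)*(2*n*(n+d)))"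
        by (simp add: divide_divide_eq_right times_divide_times_eq)
      also have "\<dots> = ((2*n)*X) / ((2*n)*((n-d)*(n+d)))" by (simp add: ac_simps)
      also have "\<dots> = X / ((n-d)*(n+d))" using npos by (rule_tac mult_divide_mult_cancel_left) simp
      finally show ?thesis unfolding e1 e2 X_def .
    qed
    have DD: "D = (n-d)*(n+d)" by (simp add: D_def algebra_simps)
    have "n * (P + Q) - 2 * d * R \<le> 2*(n+d)*(P+Q) + n*(P+Q+2*R)"
    proof -
      have "0 \<le> 2*(n+d)*(P+Q+R)" using nd2 PQR by simp
      then show ?thesis by (simp add: algebra_simps)
    qed
    then show ?thesis unfolding rhs DD using nd1 nd2
      by (simp add: divide_right_mono)
  qed
  show ?thesis unfolding F cosv nx nxy Axy nAx using key by simp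
qed

end
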